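(* If $\vec t\succ\vec t'_1$ and $\vec t\succ\vec t'_2$, then one of the following holds: $\vec t'_1=\vec t'_2$; or $\vec t'_1\succ\vec t'_2$; or $\vec t'_2\succ\vec t'_1$; or there is $\vec t''$ with $\vec t'_1\succ\vec t''$ and $\vec t'_2\succ\vec t''$.
   Context: Calculus. Pure values: $v,w::=x\mid\lambda x.\vec{s}\mid *\mid (v_1,v_2)\mid \mathtt{inl}(v)\mid\mathtt{inr}(v)$. Pure terms: $s,t::=v\mid s\,t\mid t;\vec{s}\mid \mathtt{let}\,(x_1,x_2)=t\,\mathtt{in}\,\vec{s}\mid \mathtt{match}\,t\,\{\mathtt{inl}\,x_1\mapsto\vec{s}_1\mid\mathtt{inr}\,x_2\mapsto\vec{s}_2\}$. Term distributions $\vec{t}::=\vec{0}\mid t\mid \vec{s}+\vec{t}\mid\alpha\cdot\vec{t}$ ($\alpha\in\mathbb{C}$), with equality $=$ at top level meaning the congruence generated by the weak vector space laws ($+$ commutative, associative with unit $\vec0$; $1\cdot\vec t=\vec t$; $\alpha\cdot(\beta\cdot\vec t)=\alpha\beta\cdot\vec t$; $(\alpha+\beta)\cdot\vec t=\alpha\cdot\vec t+\beta\cdot\vec t$; $\alpha\cdot(\vec t_1+\vec t_2)=\alpha\cdot\vec t_1+\alpha\cdot\vec t_2$), not acting inside pure terms and not identifying $0\cdot t$ with $\vec0$. Constructs are extended by linearity (application bilinear, pairs bilinear, $\mathtt{inl},\mathtt{inr}$ linear, $;$, let, match linear in the first argument). Atomic evaluation $t\triangleright\vec t'$: $(\lambda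 x.\vec t)\,v\triangleright\vec t[x:=v]$; $*;\vec s\triangleright\vec s$; $\mathtt{let}\,(x,y)=(v,w)\,\mathtt{in}\,\vec s\triangleright\vec s[x:=v,y:=w]$; $\mathtt{match}\,\mathtt{inl}(v)\{\ldots\}\triangleright\vec s_1[x_1:=v]$; $\mathtt{match}\,\mathtt{inr}(v)\{\ldots\}\triangleright\vec s_2[x_2:=v]$; if $t\triangleright\vec t'$ then $s\,t\triangleright s\,\vec t'$, $t\,v\triangleright\vec t'\,v$, $t;\vec s\triangleright\vec t';\vec s$, and likewise in the scrutinee of let and match ($v,w$ pure values). One-step evaluation: $\vec t\succ\vec t'$ iff $\vec t=\alpha\cdot s+\vec r$ and $\vec t'=\alpha\cdot\vec s'+\vec r$ for some $\alpha\in\mathbb C$, pure term $s$, distributions $\vec s',\vec r$ with $s\triangleright\vec s'$. *)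

theory Defs
  imports Complex_Main
begin

text \<open>Syntax of the calculus, with variables as de Bruijn indices (terms are
identified up to alpha-equivalence).  In \<open>\<lambda>x. s\<close> and in a match branch the
bound variable is index 0; in \<open>let (x1,x2) = t in s\<close> the variable x2 is
index 0 and x1 is index 1.  Pure values, pure terms and (syntactic) term
distributions are mutually defined.\<close>

datatype val =
    Var nat
  | Lam dist
  | Unit
  | PairV val val
  | InlV val
  | InrV val
and trm =
    V val
  | App trm trm
  | Seq trm dist
  | LetP trm dist
  | Match trm dist dist
and dist =
    DZero
  | Pure trm
  | DPlus dist dist
  | DScal complex dist

fun liftv :: "nat \<Rightarrow> val \<Rightarrow> val"
and liftt :: "nat \<Rightarrow> trm \<Rightarrow> trm"
and liftd :: "nat \<Rightarrow> dist \<Rightarrow> dist" where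
  "liftv k (Var n) = (if n < k then Var n else Var (Suc n))"
| "liftv k (Lam d) = Lam (liftd (Suc k) d)"
| "liftv k Unit = Unit"
| "liftv k (PairV v w) = PairV (liftv k v) (liftv k w)"
| "liftv k (InlV v) = InlV (liftv k v)"
| "liftv k (InrV v) = InrV (liftv k v)"
| "liftt k (V v) = V (liftv k v)"
| "liftt k (App s t) = App (liftt k s) (liftt k t)"
| "liftt k (Seq t d) = Seq (liftt k t) (liftd k d)"
| "liftt k (LetP t d) = LetP (liftt k t) (liftd (Suc (Suc k)) d)"
| "liftt k (Match t d1 d2) = Match (liftt k t) (liftd (Suc k) d1) (liftd (Suc k) d2)"
| "liftd k DZero = DZero"
| "liftd k (Pure t) = Pure (liftt k t)"
| "liftd k (DPlus d e) = DPlus (liftd k d) (liftd k e)"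
| "liftd k (DScal a d) = DScal a (liftd k d)"

fun substv :: "nat \<Rightarrow> val \<Rightarrow> val \<Rightarrow> val"
and substt :: "nat \<Rightarrow> val \<Rightarrow> trm \<Rightarrow> trm"
and substd :: "nat \<Rightarrow> val \<Rightarrow> dist \<Rightarrow> dist" where
  "substv k u (Var n) = (if n < k then Var n else if n = k then u else Var (n - 1))"
| "substv k u (Lam d) = Lam (substd (Suc k) (liftv 0 u) d)"
| "substv k u Unit = Unit"
| "substv k u (PairV v w) = PairV (substv k u v) (substv k u w)"
| "substv k u (InlV v) = InlV (substv k u v)"
| "substv k u (InrV v) = InrV (substv k u v)"
| "substt k u (V v) = V (substv k u v)"
| "substt k u (App s t) = App (substt k u s) (substt k u t)"
| "substt k u (Seq t d) = Seq (substt k u t) (substd k u d)"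
| "substt k u (LetP t d) = LetP (substt k u t) (substd (Suc (Suc k)) (liftv 0 (liftv 0 u)) d)"
| "substt k u (Match t d1 d2) =
     Match (substt k u t) (substd (Suc k) (liftv 0 u) d1) (substd (Suc k) (liftv 0 u) d2)"
| "substd k u DZero = DZero"
| "substd k u (Pure t) = Pure (substt k u t)"
| "substd k u (DPlus d e) = DPlus (substd k u d) (substd k u e)"
| "substd k u (DScal a d) = DScal a (substd k u d)"

fun appL :: "trm \<Rightarrow> dist \<Rightarrow> dist" where
  "appL s DZero = DZero"
| "appL s (Pure t) = Pure (App s t)"
| "appL s (DPlus d e) = DPlus (appL s d) (appL s e)"
| "appL s (DScal a d) = DScal a (appL s d)"

fun appR :: "dist \<Rightarrow> val \<Rightarrow> dist" where
  "appR DZero v = DZero"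
| "appR (Pure t) v = Pure (App t (V v))"
| "appR (DPlus d e) v = DPlus (appR d v) (appR e v)"
| "appR (DScal a d) v = DScal a (appR d v)"

fun seqD :: "dist \<Rightarrow> dist \<Rightarrow> dist" where
  "seqD DZero s = DZero"
| "seqD (Pure t) s = Pure (Seq t s)"
| "seqD (DPlus d e) s = DPlus (seqD d s) (seqD e s)"
| "seqD (DScal a d) s = DScal a (seqD d s)"

fun letD :: "dist \<Rightarrow> dist \<Rightarrow> dist" where
  "letD DZero s = DZero"
| "letD (Pure t) s = Pure (LetP t s)"
| "letD (DPlus d e) s = DPlus (letD d s) (letD e s)"
| "letD (DScal a d) s = DScal a (letD d s)"

fun matchD :: "dist \<Rightarrow> dist \<Rightarrow> dist \<Rightarrow> dist" where
  "matchD DZero s1 s2 = DZero"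
| "matchD (Pure t) s1 s2 = Pure (Match t s1 s2)"
| "matchD (DPlus d e) s1 s2 = DPlus (matchD d s1 s2) (matchD e s1 s2)"
| "matchD (DScal a d) s1 s2 = DScal a (matchD d s1 s2)"

text \<open>Equality of distributions: the congruence (w.r.t. + and scalar
multiplication, not acting inside pure terms) generated by the weak vector
space laws.\<close>
inductive deq :: "dist \<Rightarrow> dist \<Rightarrow> bool" where
  deq_refl: "deq d d"
| deq_sym: "deq d e \<Longrightarrow> deq e d"
| deq_trans: "deq d e \<Longrightarrow> deq e f \<Longrightarrow> deq d f"
| deq_plus: "deq d d' \<Longrightarrow> deq e e' \<Longrightarrow> deq (DPlus d e) (DPlus d' e')"
| deq_scal: "deq d d' \<Longrightarrow> deq (DScal a d) (DScal a d')"
| deq_comm: "deq (DPlus d e) (DPlus e d)"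
| deq_assoc: "deq (DPlus (DPlus d e) f) (DPlus d (DPlus e f))"
| deq_zero: "deq (DPlus d DZero) d"
| deq_one: "deq (DScal 1 d) d"
| deq_mult: "deq (DScal a (DScal b d)) (DScal (a * b) d)"
| deq_distr1: "deq (DScal (a + b) d) (DPlus (DScal a d) (DScal b d))"
| deq_distr2: "deq (DScal a (DPlus d e)) (DPlus (DScal a d) (DScal a e))"

inductive atomic :: "trm \<Rightarrow> dist \<Rightarrow> bool" where
  at_beta: "atomic (App (V (Lam d)) (V v)) (substd 0 v d)"
| at_seq: "atomic (Seq (V Unit) s) s"
| at_let: "atomic (LetP (V (PairV v w)) s) (substd 0 v (substd 0 (liftv 0 w) s))"
| at_inl: "atomic (Match (V (InlV v)) s1 s2) (substd 0 v s1)"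
| at_inr: "atomic (Match (V (InrV v)) s1 s2) (substd 0 v s2)"
| at_appR: "atomic t d \<Longrightarrow> atomic (App s t) (appL s d)"
| at_appL: "atomic t d \<Longrightarrow> atomic (App t (V v)) (appR d v)"
| at_seqC: "atomic t d \<Longrightarrow> atomic (Seq t s) (seqD d s)"
| at_letC: "atomic t d \<Longrightarrow> atomic (LetP t s) (letD d s)"
| at_matchC: "atomic t d \<Longrightarrow> atomic (Match t s1 s2) (matchD d s1 s2)"

definition step :: "dist \<Rightarrow> dist \<Rightarrow> bool" where
  "step d d' \<longleftrightarrow> (\<exists>a s s' r. deq d (DPlus (DScal a (Pure s)) r)
                            \<and> deq d' (DPlus (DScal a s') r) \<and> atomic s s')"

end

theory Submission
  imports Defs
begin

fun sset :: "dist \<Rightarrow> trm set" where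
  "sset DZero = {}" | "sset (Pure t) = {t}" | "sset (DPlus d e) = sset d \<union> sset e"
| "sset (DScal a d) = sset d"

fun coef :: "dist \<Rightarrow> trm \<Rightarrow> complex" where
  "coef DZero = (\<lambda>_. 0)" | "coef (Pure t) = (\<lambda>u. if u = t then 1 else 0)"
| "coef (DPlus d e) = (\<lambda>u. coef d u + coef e u)"
| "coef (DScal a d) = (\<lambda>u. a * coef d u)"

lemma finite_sset: "finite (sset d)" by (induction d rule: sset.induct) (auto split: if_splits)

lemma coef_supp: "coef d u \<noteq> 0 \<Longrightarrow> u \<in> sset d" by (induction d rule: sset.induct) (fastforce split: if_splits)+

lemma deq_sound: "deq d e \<Longrightarrow> sset d = sset e \<and> coef d = coef e"
  by (induction rule: deq.induct) (auto simp: algebra_simps)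

inductive_cases atV: "atomic (V v) d"

lemma atomic_det: "atomic t d \<Longrightarrow> atomic t d' \<Longrightarrow> d = d'"
proof (induction arbitrary: d' rule: atomic.induct)
qed (erule atomic.cases; auto elim: atV)+

declare deq_trans[trans]

lemma deq_swap: "deq (DPlus a (DPlus b c)) (DPlus b (DPlus a c))"
proof -
  have "deq (DPlus a (DPlus b c)) (DPlus (DPlus a b) c)" by (rule deq_sym, rule deq_assoc)
  also have "deq \<dots> (DPlus (DPlus b a) c)" by (rule deq_plus[OF deq_comm deq_refl])
  also have "deq \<dots> (DPlus b (DPlus a c))" by (rule deq_assoc)
  finally show ?thesis .
qed

lemma deq_four: "deq (DPlus (DPlus a b) (DPlus c d)) (DPlus (DPlus a c) (DPlus b d))"
proof -
  have "deq (DPlus (DPlus a b) (DPlus c d)) (DPlus a (DPlus b (DPlus c d)))" by (rule deq_assoc)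
  also have "deq \<dots> (DPlus a (DPlus c (DPlus b d)))" by (rule deq_plus[OF deq_refl deq_swap])
  also have "deq \<dots> (DPlus (DPlus a c) (DPlus b d))" by (rule deq_sym, rule deq_assoc)
  finally show ?thesis .
qed

lemma deq_zero_l: "deq (DPlus DZero d) d"
  by (rule deq_trans[OF deq_comm deq_zero])

lemma deq_scal_zero: "deq (DScal a DZero) DZero"
proof -
  let ?x = "DScal a DZero" and ?y = "DScal (1 - a) DZero"
  have "deq DZero (DScal 1 DZero)" by (rule deq_sym, rule deq_one)
  also have "DScal 1 DZero = DScal (a + (1 - a)) DZero" by simp
  also have "deq \<dots> (DPlus ?x ?y)" by (rule deq_distr1)
  finally have 1: "deq DZero (DPlus ?x ?y)" .
  have "deq ?x (DScal a (DPlus DZero DZero))" by (rule deq_scal, rule deq_sym, rule deq_zero)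
  also have "deq \<dots> (DPlus ?x ?x)" by (rule deq_distr2)
  finally have 2: "deq ?x (DPlus ?x ?x)" .
  have "deq ?x (DPlus ?x DZero)" by (rule deq_sym, rule deq_zero)
  also have "deq \<dots> (DPlus ?x (DPlus ?x ?y))" by (rule deq_plus[OF deq_refl 1])
  also have "deq \<dots> (DPlus (DPlus ?x ?x) ?y)" by (rule deq_sym, rule deq_assoc)
  also have "deq \<dots> (DPlus ?x ?y)" by (rule deq_plus[OF deq_sym[OF 2] deq_refl])
  also have "deq \<dots> DZero" by (rule deq_sym[OF 1])
  finally show ?thesis .
qed


definition nf :: "trm list \<Rightarrow> (trm \<Rightarrow> complex) \<Rightarrow> dist" where
  "nf xs c = foldr (\<lambda>u acc. DPlus (DScal (c u) (Pure u)) acc) xs DZero"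

lemma nf_simps[simp]: "nf [] c = DZero" "nf (x # xs) c = DPlus (DScal (c x) (Pure x)) (nf xs c)"
  by (simp_all add: nf_def)

lemma nf_cong: "(\<And>u. u \<in> set xs \<Longrightarrow> c u = c' u) \<Longrightarrow> nf xs c = nf xs c'"
  by (induction xs) auto

lemma sset_nf: "sset (nf xs c) = set xs" by (induction xs) auto

lemma coef_nf: "distinct xs \<Longrightarrow> coef (nf xs c) u = (if u \<in> set xs then c u else 0)"
  by (induction xs) auto

lemma nf_append: "deq (nf (xs @ ys) c) (DPlus (nf xs c) (nf ys c))"
proof (induction xs)
  case Nil then show ?case by (simp add: deq_sym deq_zero_l)
next
  case (Cons x xs)
  have "deq (DPlus (DScal (c x) (Pure x)) (nf (xs @ ys) c)) (DPlus (DScal (c x) (Pure x)) (DPlus (nf xs c) (nf ys c)))"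
    by (rule deq_plus[OF deq_refl Cons.IH])
  also have "deq \<dots> (DPlus (DPlus (DScal (c x) (Pure x)) (nf xs c)) (nf ys c))" by (rule deq_sym, rule deq_assoc)
  finally show ?case by simp
qed

lemma nf_scal: "deq (DScal a (nf xs c)) (nf xs (\<lambda>u. a * c u))"
proof (induction xs)
  case Nil then show ?case by (simp add: deq_scal_zero)
next
  case (Cons x xs)
  have "deq (DScal a (DPlus (DScal (c x) (Pure x)) (nf xs c))) (DPlus (DScal a (DScal (c x) (Pure x))) (DScal a (nf xs c)))"
    by (rule deq_distr2)
  also have "deq \<dots> (DPlus (DScal (a * c x) (Pure x)) (nf xs (\<lambda>u. a * c u)))"
    by (rule deq_plus[OF deq_mult Cons.IH])
  finally show ?case by simp
qed

lemma nf_add1: "distinct xs \<Longrightarrow> t \<in> set xs \<Longrightarrow>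
   deq (DPlus (DScal a (Pure t)) (nf xs c)) (nf xs (c(t := c t + a)))"
proof (induction xs)
  case Nil then show ?case by simp
next
  case (Cons x xs)
  show ?case
  proof (cases "x = t")
    case True
    with Cons.prems have "nf xs (c(t := c t + a)) = nf xs c" by (auto intro: nf_cong)
    moreover have "deq (DPlus (DScal a (Pure t)) (DPlus (DScal (c t) (Pure t)) (nf xs c)))
       (DPlus (DScal (c t + a) (Pure t)) (nf xs c))"
    proof -
      have "deq (DPlus (DScal a (Pure t)) (DPlus (DScal (c t) (Pure t)) (nf xs c)))
         (DPlus (DPlus (DScal a (Pure t)) (DScal (c t) (Pure t))) (nf xs c))" by (rule deq_sym, rule deq_assoc)
      also have "deq \<dots> (DPlus (DPlus (DScal (c t) (Pure t)) (DScal a (Pure t))) (nf xs c))"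
        by (rule deq_plus[OF deq_comm deq_refl])
      also have "deq \<dots> (DPlus (DScal (c t + a) (Pure t)) (nf xs c))"
        by (rule deq_plus[OF deq_sym[OF deq_distr1] deq_refl])
      finally show ?thesis .
    qed
    ultimately show ?thesis by (simp only: nf_simps True fun_upd_same)
  next
    case False
    have IH: "deq (DPlus (DScal a (Pure t)) (nf xs c)) (nf xs (c(t := c t + a)))"
      by (rule Cons.IH) (use Cons.prems False in auto)
    have "deq (DPlus (DScal a (Pure t)) (DPlus (DScal (c x) (Pure x)) (nf xs c)))
       (DPlus (DScal (c x) (Pure x)) (DPlus (DScal a (Pure t)) (nf xs c)))" by (rule deq_swap)
    also have "deq \<dots> (DPlus (DScal (c x) (Pure x)) (nf xs (c(t := c t + a))))"
      by (rule deq_plus[OF deq_refl IH])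
    finally show ?thesis by (simp only: nf_simps fun_upd_other[OF False])
  qed
qed

lemma nf_sub: "distinct xs \<Longrightarrow> distinct ys \<Longrightarrow> set ys \<subseteq> set xs \<Longrightarrow>
   deq (DPlus (nf ys c') (nf xs c)) (nf xs (\<lambda>u. (if u \<in> set ys then c' u else 0) + c u))"
proof (induction ys arbitrary: c)
  case Nil then show ?case by (simp add: deq_zero_l)
next
  case (Cons y ys)
  let ?c = "\<lambda>u. (if u \<in> set ys then c' u else 0) + c u"
  have "deq (DPlus (nf (y # ys) c') (nf xs c)) (DPlus (DScal (c' y) (Pure y)) (DPlus (nf ys c') (nf xs c)))"
    by (simp add: deq_assoc)
  also have "deq \<dots> (DPlus (DScal (c' y) (Pure y)) (nf xs ?c))"
    using Cons by (auto intro: deq_plus deq_refl)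
  also have "deq \<dots> (nf xs (?c(y := ?c y + c' y)))"
    using Cons.prems by (intro nf_add1) auto
  also have "nf xs (?c(y := ?c y + c' y)) = nf xs (\<lambda>u. (if u \<in> set (y # ys) then c' u else 0) + c u)"
    using Cons.prems by (intro nf_cong) auto
  finally show ?case .
qed

lemma nf_filter: "deq (nf xs c) (DPlus (nf (filter P xs) c) (nf (filter (\<lambda>u. \<not> P u) xs) c))"
proof (induction xs)
  case Nil then show ?case by (simp add: deq_sym deq_zero)
next
  case (Cons x xs)
  show ?case
  proof (cases "P x")
    case True
    have "deq (DPlus (DScal (c x) (Pure x)) (nf xs c)) (DPlus (DScal (c x) (Pure x)) (DPlus (nf (filter P xs) c) (nf (filter (\<lambda>u. \<not> P u) xs) c)))"
      by (rule deq_plus[OF deq_refl Cons.IH])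
    also have "deq \<dots> (DPlus (DPlus (DScal (c x) (Pure x)) (nf (filter P xs) c)) (nf (filter (\<lambda>u. \<not> P u) xs) c))"
      by (rule deq_sym, rule deq_assoc)
    finally show ?thesis using True by simp
  next
    case False
    have "deq (DPlus (DScal (c x) (Pure x)) (nf xs c)) (DPlus (DScal (c x) (Pure x)) (DPlus (nf (filter P xs) c) (nf (filter (\<lambda>u. \<not> P u) xs) c)))"
      by (rule deq_plus[OF deq_refl Cons.IH])
    also have "deq \<dots> (DPlus (nf (filter P xs) c) (DPlus (DScal (c x) (Pure x)) (nf (filter (\<lambda>u. \<not> P u) xs) c)))"
      by (rule deq_swap)
    finally show ?thesis using False by simp
  qed
qed

lemma nf_exists: "\<exists>xs. distinct xs \<and> set xs = sset d \<and> deq d (nf xs (coef d))"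
proof (induction d rule: sset.induct)
  case 1 then show ?case by (intro exI[of _ "[]"]) (simp add: deq_refl)
next
  case (2 t) then show ?case
    by (intro exI[of _ "[t]"]) (simp, rule deq_trans[OF deq_sym[OF deq_one] deq_sym[OF deq_zero]])
next
  case (3 d e)
  then obtain xd xe where d: "distinct xd" "set xd = sset d" "deq d (nf xd (coef d))"
    and e: "distinct xe" "set xe = sset e" "deq e (nf xe (coef e))" by blast
  define G where "G = filter (\<lambda>u. u \<in> set xd) xe"
  define F where "F = filter (\<lambda>u. \<not> u \<in> set xd) xe"
  have "deq (DPlus d e) (DPlus (nf xd (coef d)) (nf xe (coef e)))"
    using d e by (intro deq_plus)
  also have "deq \<dots> (DPlus (nf xd (coef d)) (DPlus (nf G (coef e)) (nf F (coef e))))"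
    unfolding G_def F_def by (intro deq_plus deq_refl nf_filter)
  also have "deq \<dots> (DPlus (DPlus (nf G (coef e)) (nf xd (coef d))) (nf F (coef e)))"
    by (rule deq_trans[OF deq_swap deq_sym[OF deq_assoc]])
  also have "deq \<dots> (DPlus (nf xd (\<lambda>u. (if u \<in> set G then coef e u else 0) + coef d u)) (nf F (coef e)))"
    using d e unfolding G_def by (intro deq_plus deq_refl nf_sub) auto
  also have "nf xd (\<lambda>u. (if u \<in> set G then coef e u else 0) + coef d u) = nf xd (coef (DPlus d e))"
    using d e unfolding G_def by (intro nf_cong) (auto dest: coef_supp)
  also have "nf F (coef e) = nf F (coef (DPlus d e))"
    using d e unfolding F_def by (intro nf_cong) (auto dest: coef_supp)
  also have "deq (DPlus (nf xd (coef (DPlus d e))) (nf F (coef (DPlus d e)))) (nf (xd @ F) (coef (DPlus d e)))"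
    by (rule deq_sym, rule nf_append)
  finally have X: "deq (DPlus d e) (nf (xd @ F) (coef (DPlus d e)))" .
  have "distinct (xd @ F) \<and> set (xd @ F) = sset (DPlus d e)"
    using d e by (auto simp: F_def)
  then show ?case using X by blast
next
  case (4 a d)
  then obtain xs where d: "distinct xs" "set xs = sset d" "deq d (nf xs (coef d))" by blast
  have "deq (DScal a d) (nf xs (\<lambda>u. a * coef d u))"
    by (rule deq_trans[OF deq_scal[OF d(3)] nf_scal])
  then show ?case using d by auto
qed

lemma nf_pull: "distinct xs \<Longrightarrow> x \<in> set xs \<Longrightarrow>
   deq (nf xs c) (DPlus (DScal (c x) (Pure x)) (nf (remove1 x xs) c))"
proof (induction xs)
  case Nil then show ?case by simp
next
  case (Cons y xs)
  show ?case
  proof (cases "x = y")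
    case True then show ?thesis by (simp add: deq_refl)
  next
    case False
    have "deq (DPlus (DScal (c y) (Pure y)) (nf xs c)) (DPlus (DScal (c y) (Pure y)) (DPlus (DScal (c x) (Pure x)) (nf (remove1 x xs) c)))"
      using Cons False by (intro deq_plus deq_refl Cons.IH) auto
    also have "deq \<dots> (DPlus (DScal (c x) (Pure x)) (DPlus (DScal (c y) (Pure y)) (nf (remove1 x xs) c)))"
      by (rule deq_swap)
    finally show ?thesis using False by simp
  qed
qed

lemma nf_perm: "distinct xs \<Longrightarrow> distinct ys \<Longrightarrow> set xs = set ys \<Longrightarrow> deq (nf xs c) (nf ys c)"
proof (induction ys arbitrary: xs)
  case Nil then show ?case by (simp add: deq_refl)
next
  case (Cons y ys)
  have "deq (nf xs c) (DPlus (DScal (c y) (Pure y)) (nf (remove1 y xs) c))"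
    using Cons.prems by (intro nf_pull) auto
  also have "deq \<dots> (nf (y # ys) c)"
    using Cons by (simp, intro deq_plus deq_refl Cons.IH) (auto simp: set_remove1_eq)
  finally show ?case .
qed

lemma deq_complete: "sset d = sset e \<Longrightarrow> coef d = coef e \<Longrightarrow> deq d e"
proof -
  obtain xs where d: "distinct xs" "set xs = sset d" "deq d (nf xs (coef d))" using nf_exists by blast
  obtain ys where e: "distinct ys" "set ys = sset e" "deq e (nf ys (coef e))" using nf_exists by blast
  assume "sset d = sset e" "coef d = coef e"
  with d e have "deq (nf xs (coef d)) (nf ys (coef e))" by (simp add: nf_perm)
  then show ?thesis by (rule deq_trans[OF d(3) deq_trans[OF _ deq_sym[OF e(3)]]])
qed

lemma deq_iff: "deq d e \<longleftrightarrow> sset d = sset e \<and> coef d = coef e"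
  using deq_complete deq_sound by blast

definition sstep :: "dist \<Rightarrow> dist \<Rightarrow> complex \<Rightarrow> trm \<Rightarrow> dist \<Rightarrow> bool" where
  "sstep d d' a s s' \<longleftrightarrow> atomic s s' \<and> s \<in> sset d \<and>
     coef d' = (\<lambda>u. coef d u - a * (if u = s then 1 else 0) + a * coef s' u) \<and>
     (sset d' = sset s' \<union> sset d \<or> (a = coef d s \<and> sset d' = sset s' \<union> (sset d - {s})))"

lemma realize: "finite X \<Longrightarrow> (\<And>u. c u \<noteq> 0 \<Longrightarrow> u \<in> X) \<Longrightarrow> \<exists>r. sset r = X \<and> coef r = c"
proof -
  assume X: "finite X" and c: "\<And>u. c u \<noteq> 0 \<Longrightarrow> u \<in> X"
  obtain xs where xs: "distinct xs" "set xs = X" using X finite_distinct_list by blast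
  have "coef (nf xs c) = c" using xs c by (intro ext) (auto simp: coef_nf)
  then show ?thesis using xs by (intro exI[of _ "nf xs c"]) (simp add: sset_nf)
qed

lemma step_D: "step d d' \<Longrightarrow> \<exists>a s s'. sstep d d' a s s'"
proof -
  assume "step d d'"
  then obtain a s s' r where 1: "deq d (DPlus (DScal a (Pure s)) r)"
    and 2: "deq d' (DPlus (DScal a s') r)" and at: "atomic s s'"
    unfolding step_def by blast
  from 1 have S1: "sset d = insert s (sset r)" and C1: "coef d = (\<lambda>u. a * (if u = s then 1 else 0) + coef r u)"
    by (auto simp: deq_iff)
  from 2 have S2: "sset d' = sset s' \<union> sset r" and C2: "coef d' = (\<lambda>u. a * coef s' u + coef r u)"
    by (auto simp: deq_iff)
  have "coef d' = (\<lambda>u. coef d u - a * (if u = s then 1 else 0) + a * coef s' u)"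
    using C1 C2 by auto
  moreover have "sset d' = sset s' \<union> sset d \<or> (a = coef d s \<and> sset d' = sset s' \<union> (sset d - {s}))"
  proof (cases "s \<in> sset r")
    case True then show ?thesis using S1 S2 by auto
  next
    case False
    then have "coef r s = 0" using coef_supp by blast
    then show ?thesis using False S1 S2 C1 by auto
  qed
  ultimately show ?thesis using at S1 unfolding sstep_def by blast
qed

lemma step_I: "sstep d d' a s s' \<Longrightarrow> step d d'"
proof -
  assume H: "sstep d d' a s s'"
  then have at: "atomic s s'" and sin: "s \<in> sset d"
    and C: "coef d' = (\<lambda>u. coef d u - a * (if u = s then 1 else 0) + a * coef s' u)"
    and S: "sset d' = sset s' \<union> sset d \<or> (a = coef d s \<and> sset d' = sset s' \<union> (sset d - {s}))"
    unfolding sstep_def by auto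
  define R where "R = (if sset d' = sset s' \<union> sset d then sset d else sset d - {s})"
  define cr where "cr = (\<lambda>u. coef d u - a * (if u = s then 1 else 0))"
  have "finite R" unfolding R_def using finite_sset by auto
  moreover have "\<And>u. cr u \<noteq> 0 \<Longrightarrow> u \<in> R"
    using S sin coef_supp[of d] unfolding R_def cr_def by (auto split: if_splits)
  ultimately obtain r where r: "sset r = R" "coef r = cr" using realize by blast
  have "deq d (DPlus (DScal a (Pure s)) r)"
    unfolding deq_iff using r sin unfolding R_def cr_def by auto
  moreover have "deq d' (DPlus (DScal a s') r)"
    unfolding deq_iff using r S C unfolding R_def cr_def by (auto simp: algebra_simps)
  ultimately show ?thesis unfolding step_def using at by blast
qed

lemma same_keep:
  assumes 1: "sstep t t1 a s s'" and 2: "sstep t t2 b s s'" and k: "sset t1 = sset s' \<union> sset t"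
  shows "sstep t1 t2 (b - a) s s'"
proof -
  from 1 have at: "atomic s s'" and sin: "s \<in> sset t"
    and C1: "coef t1 = (\<lambda>u. coef t u - a * (if u = s then 1 else 0) + a * coef s' u)"
    unfolding sstep_def by auto
  from 2 have C2: "coef t2 = (\<lambda>u. coef t u - b * (if u = s then 1 else 0) + b * coef s' u)"
    and S2: "sset t2 = sset s' \<union> sset t \<or> (b = coef t s \<and> sset t2 = sset s' \<union> (sset t - {s}))"
    unfolding sstep_def by auto
  have C: "coef t2 = (\<lambda>u. coef t1 u - (b - a) * (if u = s then 1 else 0) + (b - a) * coef s' u)"
    using C1 C2 by (auto simp: algebra_simps)
  have "sset t2 = sset s' \<union> sset t1 \<or> (b - a = coef t1 s \<and> sset t2 = sset s' \<union> (sset t1 - {s}))"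
  proof (cases "sset t2 = sset s' \<union> sset t")
    case True then show ?thesis using k by auto
  next
    case False
    with S2 have b: "b = coef t s" and S: "sset t2 = sset s' \<union> (sset t - {s})" by auto
    show ?thesis
    proof (cases "s \<in> sset s'")
      case True then show ?thesis using S k by auto
    next
      case False
      then have "coef s' s = 0" using coef_supp by blast
      then have "b - a = coef t1 s" using C1 b by simp
      then show ?thesis using S k by auto
    qed
  qed
  then show ?thesis unfolding sstep_def using at sin k C by auto
qed

lemma diff_half:
  assumes 1: "sstep t t1 a s1 s1'" and 2: "sstep t t2 b s2 s2'" and ne: "s1 \<noteq> s2"
    and X: "sset t'' = sset s1' \<union> sset s2' \<union> (sset t - {s1, s2}) \<union> (sset t1 \<inter> {s1}) \<union> (sset t2 \<inter> {s2})"
    and c: "coef t'' = (\<lambda>u. coef t u - a * (if u = s1 then 1 else 0) - b * (if u = s2 then 1 else 0)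
                + a * coef s1' u + b * coef s2' u)"
  shows "sstep t1 t'' b s2 s2'"
proof -
  from 1 have at1: "atomic s1 s1'" and sin1: "s1 \<in> sset t"
    and C1: "coef t1 = (\<lambda>u. coef t u - a * (if u = s1 then 1 else 0) + a * coef s1' u)"
    and S1: "sset t1 = sset s1' \<union> sset t \<or> (a = coef t s1 \<and> sset t1 = sset s1' \<union> (sset t - {s1}))"
    unfolding sstep_def by auto
  from 2 have at2: "atomic s2 s2'" and sin2: "s2 \<in> sset t"
    and C2: "coef t2 = (\<lambda>u. coef t u - b * (if u = s2 then 1 else 0) + b * coef s2' u)"
    and S2: "sset t2 = sset s2' \<union> sset t \<or> (b = coef t s2 \<and> sset t2 = sset s2' \<union> (sset t - {s2}))"
    unfolding sstep_def by auto
  have s2in: "s2 \<in> sset t1" using S1 sin2 ne by auto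
  have C: "coef t'' = (\<lambda>u. coef t1 u - b * (if u = s2 then 1 else 0) + b * coef s2' u)"
    using C1 c by (auto simp: algebra_simps)
  have "sset t'' = sset s2' \<union> sset t1 \<or> (b = coef t1 s2 \<and> sset t'' = sset s2' \<union> (sset t1 - {s2}))"
  proof (cases "s2 \<in> sset t2 \<or> s2 \<in> sset s1'")
    case True
    have "sset t'' = sset s2' \<union> sset t1"
      using True X S1 sin1 s2in ne by auto
    then show ?thesis by simp
  next
    case False
    then have n2: "s2 \<notin> sset t2" "s2 \<notin> sset s1'" by auto
    then have "s2 \<notin> sset s2'" using S2 sin2 by auto
    then have b: "b = coef t s2" using S2 n2 sin2 by auto
    have "coef s1' s2 = 0" using n2 coef_supp by blast
    then have "b = coef t1 s2" using b C1 ne by simp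
    moreover have "sset t'' = sset s2' \<union> (sset t1 - {s2})"
      using n2 \<open>s2 \<notin> sset s2'\<close> X S1 sin1 s2in ne by auto
    ultimately show ?thesis by simp
  qed
  then show ?thesis unfolding sstep_def using at2 s2in C by auto
qed

theorem mainTheorem8:
  assumes "step t t1" and "step t t2"
  shows "deq t1 t2 \<or> step t1 t2 \<or> step t2 t1 \<or> (\<exists>t''. step t1 t'' \<and> step t2 t'')"
proof -
  obtain a s1 s1' where H1: "sstep t t1 a s1 s1'" using step_D[OF assms(1)] by blast
  obtain b s2 s2' where H2: "sstep t t2 b s2 s2'" using step_D[OF assms(2)] by blast
  show ?thesis
  proof (cases "s1 = s2")
    case True
    with H1 H2 have "s1' = s2'" unfolding sstep_def using atomic_det by blast
    with True H2 have H2': "sstep t t2 b s1 s1'" by simp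
    show ?thesis
    proof (cases "sset t1 = sset s1' \<union> sset t")
      case True
      then have "step t1 t2" using same_keep[OF H1 H2' True] step_I by blast
      then show ?thesis by blast
    next
      case F1: False
      show ?thesis
      proof (cases "sset t2 = sset s1' \<union> sset t")
        case True
        then have "step t2 t1" using same_keep[OF H2' H1 True] step_I by blast
        then show ?thesis by blast
      next
        case False
        with F1 H1 H2' have "a = coef t s1" "b = coef t s1"
          "sset t1 = sset s1' \<union> (sset t - {s1})" "sset t2 = sset s1' \<union> (sset t - {s1})"
          "coef t1 = (\<lambda>u. coef t u - a * (if u = s1 then 1 else 0) + a * coef s1' u)"
          "coef t2 = (\<lambda>u. coef t u - b * (if u = s1 then 1 else 0) + b * coef s1' u)"
          unfolding sstep_def by auto
        then have "deq t1 t2" unfolding deq_iff by simp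
        then show ?thesis by blast
      qed
    qed
  next
    case ne: False
    define X where "X = sset s1' \<union> sset s2' \<union> (sset t - {s1, s2}) \<union> (sset t1 \<inter> {s1}) \<union> (sset t2 \<inter> {s2})"
    define c where "c = (\<lambda>u. coef t u - a * (if u = s1 then 1 else 0) - b * (if u = s2 then 1 else 0)
                + a * coef s1' u + b * coef s2' u)"
    from H1 have C1: "coef t1 = (\<lambda>u. coef t u - a * (if u = s1 then 1 else 0) + a * coef s1' u)"
      unfolding sstep_def by auto
    from H2 have C2: "coef t2 = (\<lambda>u. coef t u - b * (if u = s2 then 1 else 0) + b * coef s2' u)"
      unfolding sstep_def by auto
    have "finite X" unfolding X_def using finite_sset by auto
    moreover have "\<And>u. c u \<noteq> 0 \<Longrightarrow> u \<in> X"
    proof -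
      fix u assume cu: "c u \<noteq> 0"
      show "u \<in> X"
      proof (rule ccontr)
        assume nX: "u \<notin> X"
        then have "u \<notin> sset s1'" "u \<notin> sset s2'" unfolding X_def by auto
        then have z: "coef s1' u = 0" "coef s2' u = 0" using coef_supp by blast+
        show False
        proof (cases "u = s1")
          case True
          then have "u \<notin> sset t1" using nX unfolding X_def by auto
          then have "coef t1 u = 0" using coef_supp by blast
          then show False using cu z C1 True ne unfolding c_def by auto
        next
          case F: False
          show False
          proof (cases "u = s2")
            case True
            then have "u \<notin> sset t2" using nX unfolding X_def by auto
            then have "coef t2 u = 0" using coef_supp by blast
            then show False using cu z C2 True ne unfolding c_def by auto
          next
            case False
            then have "u \<notin> sset t" using nX F unfolding X_def by auto
            then have "coef t u = 0" using coef_supp by blast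
            then show False using cu z F False unfolding c_def by auto
          qed
        qed
      qed
    qed
    ultimately obtain t'' where T: "sset t'' = X" "coef t'' = c" using realize by blast
    have "sstep t1 t'' b s2 s2'"
      by (rule diff_half[OF H1 H2 ne]) (use T in \<open>simp_all add: X_def c_def\<close>)
    moreover have "sstep t2 t'' a s1 s1'"
      by (rule diff_half[OF H2 H1 ne[symmetric]]) (use T in \<open>auto simp: X_def c_def algebra_simps\<close>)
    ultimately show ?thesis using step_I by blast
  qed
qed

end
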